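(* For every integer $n\ge 0$, \[ \sum_{j=0}^{n} \frac{q^{j}(q;q)_{n+j}}{(q^2;q^2)_j}=(q^2;q^2)_n . \]
   Context: $(a;q)_0:=1$ and $(a;q)_n:=(1-a)(1-aq)\cdots(1-aq^{n-1})$ for $n\ge1$. *)

theory Defs
  imports Complex_Main
begin

definition qpoch :: "'a::comm_ring_1 \<Rightarrow> 'a \<Rightarrow> nat \<Rightarrow> 'a" where
  "qpoch a q n = (\<Prod>k<n. 1 - a * q ^ k)"

end

theory Submission
  imports Defs
begin

definition EE :: "'a::comm_ring_1 \<Rightarrow> nat \<Rightarrow> nat \<Rightarrow> 'a" where
  "EE q j n = (\<Prod>k\<in>{j..<n}. 1 - q^2 * (q^2) ^ k)"

lemma qpoch_Suc: "qpoch a q (Suc n) = qpoch a q n * (1 - a * q ^ n)"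
  by (simp add: qpoch_def)

lemma D_split:
  assumes "j \<le> n"
  shows "qpoch (q^2) (q^2) n = qpoch (q^2) (q^2) j * EE q j n"
proof -
  have "qpoch (q^2) (q^2) n = (\<Prod>k\<in>{0..<n}. 1 - q^2 * (q^2) ^ k)"
    by (simp add: qpoch_def atLeast0LessThan)
  also have "\<dots> = (\<Prod>k\<in>{0..<j}. 1 - q^2 * (q^2) ^ k) * EE q j n"
    unfolding EE_def using assms by (simp add: prod.atLeastLessThan_concat)
  finally show ?thesis by (simp add: qpoch_def atLeast0LessThan)
qed

lemma EE_Suc: "j \<le> n \<Longrightarrow> EE q j (Suc n) = EE q j n * (1 - q^2 * (q^2)^n)"
  unfolding EE_def by (simp add: prod.atLeastLessThan_Suc)

lemma EE_same: "EE q n n = 1" unfolding EE_def by simp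

lemma EE_step: "m < n \<Longrightarrow> EE q m n = (1 - q^2 * (q^2)^m) * EE q (Suc m) n"
  unfolding EE_def by (simp add: prod.atLeast_Suc_lessThan)

lemma tele:
  fixes q :: "'a::comm_ring_1"
  assumes "m \<le> n"
  shows "(\<Sum>j=0..m. qpoch q q (n+j) * (1 - (q^2)^j) * EE q j n - qpoch q q (Suc (n+j)) * EE q j n)
     = - (qpoch q q (Suc (n+m)) * EE q m n)"
  using assms
proof (induction m)
  case 0
  then show ?case by simp
next
  case (Suc m)
  have h: "EE q m n = (1 - q^2 * (q^2)^m) * EE q (Suc m) n" using Suc.prems by (simp add: EE_step)
  have "(q^2)^(Suc m) = q^2 * (q^2)^m" by simp
  then show ?case using Suc by (simp add: h algebra_simps)
qed

lemma local_id:
  fixes q :: "'a::comm_ring_1"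
  shows "q^j * qpoch q q (Suc (n+j)) =
     q^j * qpoch q q (n+j) * (1 - q^2 * (q^2)^n) - q^(Suc n) * qpoch q q (Suc (n+j))
     + q^(Suc n) * qpoch q q (n+j) * (1 - (q^2)^j)"
proof -
  have a: "(q^2)^n = q^n * q^n" "(q^2)^j = q^j*q^j"
    by (simp_all add: power2_eq_square power_mult_distrib)
  show ?thesis by (simp add: qpoch_Suc a power_add power2_eq_square algebra_simps)
qed

lemma poly_id:
  fixes q :: "'a::comm_ring_1"
  shows "(\<Sum>j=0..n. q^j * qpoch q q (n+j) * EE q j n) = (qpoch (q^2) (q^2) n)^2"
proof (induction n)
  case 0
  then show ?case by (simp add: EE_same qpoch_def)
next
  case (Suc n)
  define c where "c = 1 - q^2 * (q^2)^n"
  have t: "\<And>j. j \<in> {0..n} \<Longrightarrow> q^j * qpoch q q (Suc n + j) * EE q j (Suc n)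
      = c^2 * (q^j * qpoch q q (n+j) * EE q j n)
        + c * q^(Suc n) * (qpoch q q (n+j) * (1 - (q^2)^j) * EE q j n - qpoch q q (Suc (n+j)) * EE q j n)"
  proof -
    fix j assume "j \<in> {0..n}"
    then have "EE q j (Suc n) = EE q j n * c" by (simp add: EE_Suc c_def)
    moreover have "q^j * qpoch q q (Suc n + j) = q^j * qpoch q q (Suc (n+j))" by simp
    ultimately show "q^j * qpoch q q (Suc n + j) * EE q j (Suc n)
      = c^2 * (q^j * qpoch q q (n+j) * EE q j n)
        + c * q^(Suc n) * (qpoch q q (n+j) * (1 - (q^2)^j) * EE q j n - qpoch q q (Suc (n+j)) * EE q j n)"
    proof -
      assume e: "EE q j (Suc n) = EE q j n * c"
      have "q^j * qpoch q q (Suc n + j) * EE q j (Suc n) = (q^j * qpoch q q (Suc (n+j))) * (EE q j n * c)"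
        using e by simp
      also have "\<dots> = (q^j * qpoch q q (n+j) * c - q^(Suc n) * qpoch q q (Suc (n+j))
          + q^(Suc n) * qpoch q q (n+j) * (1 - (q^2)^j)) * (EE q j n * c)"
        using local_id[of q j n] unfolding c_def[symmetric] by simp
      finally show ?thesis by (simp add: power2_eq_square algebra_simps)
    qed
  qed
  have "(\<Sum>j=0..Suc n. q^j * qpoch q q (Suc n + j) * EE q j (Suc n))
     = (\<Sum>j=0..n. q^j * qpoch q q (Suc n + j) * EE q j (Suc n)) + q^(Suc n) * qpoch q q (Suc n + Suc n)"
    by (simp add: EE_same)
  also have "(\<Sum>j=0..n. q^j * qpoch q q (Suc n + j) * EE q j (Suc n))
     = c^2 * (\<Sum>j=0..n. q^j * qpoch q q (n+j) * EE q j n)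
       + c * q^(Suc n) * (\<Sum>j=0..n. qpoch q q (n+j) * (1 - (q^2)^j) * EE q j n - qpoch q q (Suc (n+j)) * EE q j n)"
  proof -
    have "(\<Sum>j=0..n. q^j * qpoch q q (Suc n + j) * EE q j (Suc n))
      = (\<Sum>j=0..n. c^2 * (q^j * qpoch q q (n+j) * EE q j n)
        + c * q^(Suc n) * (qpoch q q (n+j) * (1 - (q^2)^j) * EE q j n - qpoch q q (Suc (n+j)) * EE q j n))"
      by (rule sum.cong[OF refl], rule t)
    then show ?thesis by (simp only: sum.distrib sum_distrib_left)
  qed
  also have "(\<Sum>j=0..n. qpoch q q (n+j) * (1 - (q^2)^j) * EE q j n - qpoch q q (Suc (n+j)) * EE q j n)
      = - qpoch q q (Suc (n+n))"
    using tele[of n n q] by (simp add: EE_same)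
  also have "qpoch q q (Suc n + Suc n) = qpoch q q (Suc (n+n)) * c"
    by (simp add: qpoch_Suc c_def power2_eq_square power_mult_distrib power_add algebra_simps)
  finally show ?case using Suc.IH
    by (simp add: c_def qpoch_Suc power2_eq_square algebra_simps)
qed

theorem lemma3p3:
  fixes q :: "'a::field" and n :: nat
  assumes "\<And>j. j \<le> n \<Longrightarrow> qpoch (q^2) (q^2) j \<noteq> 0"
  shows "(\<Sum>j=0..n. q ^ j * qpoch q q (n + j) / qpoch (q^2) (q^2) j) = qpoch (q^2) (q^2) n"
proof -
  let ?D = "qpoch (q^2) (q^2)"
  have Dn: "?D n \<noteq> 0" using assms by simp
  have "(\<Sum>j=0..n. q ^ j * qpoch q q (n + j) / ?D j) * ?D n
      = (\<Sum>j=0..n. q^j * qpoch q q (n+j) * EE q j n)"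
    unfolding sum_distrib_right
  proof (rule sum.cong[OF refl])
    fix j assume "j \<in> {0..n}"
    then have "j \<le> n" by simp
    then show "q ^ j * qpoch q q (n + j) / ?D j * ?D n = q^j * qpoch q q (n+j) * EE q j n"
      using D_split[OF \<open>j \<le> n\<close>, of q] assms[OF \<open>j \<le> n\<close>] by simp
  qed
  also have "\<dots> = ?D n * ?D n" by (simp add: poly_id power2_eq_square)
  finally show ?thesis using Dn by simp
qed

end
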